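(* Let $d\ge5$ with $d\equiv1\pmod 4$, and let $g:\{-1,1\}^d\to\mathbb{R}$, $g(x)=|x_1+\dots+x_d|$, with Fourier coefficients $\hat g(S)$, $S\subseteq[d]$. Then for all $u\in[d]$, \[\sum_{S\subseteq[d],\,u\in S}|\hat g(S)|\ge\frac{2^{(d-1)/2}}{2\sqrt{d-1}}.\]
   Context: The Fourier coefficients of $g:\{-1,1\}^d\to\mathbb{R}$ are the unique reals $\hat g(S)$ with $g(x)=\sum_{S\subseteq[d]}\hat g(S)\prod_{i\in S}x_i$ for all $x$. *)

theory Defs
  imports Complex_Main
begin

definition cube :: "nat \<Rightarrow> (nat \<Rightarrow> real) set" where
  "cube d = {x. (\<forall>i\<in>{1..d}. x i = -1 \<or> x i = 1) \<and> (\<forall>i. i \<notin> {1..d} \<longrightarrow> x i = 0)}"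

definition fourier_coeff :: "nat \<Rightarrow> ((nat \<Rightarrow> real) \<Rightarrow> real) \<Rightarrow> nat set \<Rightarrow> real" where
  "fourier_coeff d g = (THE c. (\<forall>T. T \<notin> Pow {1..d} \<longrightarrow> c T = 0) \<and>
      (\<forall>x\<in>cube d. g x = (\<Sum>T\<in>Pow {1..d}. c T * (\<Prod>i\<in>T. x i))))"

end

theory Submission
  imports Defs
begin

definition cubeI :: "nat set \<Rightarrow> (nat \<Rightarrow> real) set" where
  "cubeI I = {x. (\<forall>i\<in>I. x i = -1 \<or> x i = 1) \<and> (\<forall>i. i \<notin> I \<longrightarrow> x i = 0)}"

definition chi :: "nat set \<Rightarrow> (nat \<Rightarrow> real) \<Rightarrow> real" where
  "chi S x = (\<Prod>i\<in>S. x i)"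

lemma cube_eq: "cube d = cubeI {1..d}"
  unfolding cube_def cubeI_def by auto

lemma cubeI_empty: "cubeI {} = {\<lambda>_. 0}"
  unfolding cubeI_def by auto

lemma cubeI_insert:
  assumes "a \<notin> I"
  shows "cubeI (insert a I) = (\<lambda>x. x(a:=1)) ` cubeI I \<union> (\<lambda>x. x(a:=-1)) ` cubeI I"
proof
  show "cubeI (insert a I) \<subseteq> (\<lambda>x. x(a:=1)) ` cubeI I \<union> (\<lambda>x. x(a:=-1)) ` cubeI I"
  proof
    fix x assume x: "x \<in> cubeI (insert a I)"
    have y: "x(a:=0) \<in> cubeI I" using x assms unfolding cubeI_def by auto
    have "x a = 1 \<or> x a = -1" using x unfolding cubeI_def by auto
    then show "x \<in> (\<lambda>x. x(a:=1)) ` cubeI I \<union> (\<lambda>x. x(a:=-1)) ` cubeI I"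
    proof
      assume "x a = 1" then have "x = (x(a:=0))(a:=1)" by auto
      then show ?thesis using y by blast
    next
      assume "x a = -1" then have "x = (x(a:=0))(a:=-1)" by auto
      then show ?thesis using y by blast
    qed
  qed
next
  show "(\<lambda>x. x(a:=1)) ` cubeI I \<union> (\<lambda>x. x(a:=-1)) ` cubeI I \<subseteq> cubeI (insert a I)"
    unfolding cubeI_def by (auto; metis)
qed

lemma cubeI_a0: "a \<notin> I \<Longrightarrow> x \<in> cubeI I \<Longrightarrow> x a = 0"
  unfolding cubeI_def by auto

lemma finite_cubeI: "finite I \<Longrightarrow> finite (cubeI I)"
  by (induction I rule: finite_induct) (auto simp: cubeI_empty cubeI_insert)

lemma sum_cubeI_insert:
  assumes "finite I" "a \<notin> I"
  shows "(\<Sum>x\<in>cubeI (insert a I). F x) = (\<Sum>x\<in>cubeI I. F (x(a:=1)) + F (x(a:=-1)))"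
proof -
  have inj1: "inj_on (\<lambda>x. x(a:=t)) (cubeI I)" for t :: real
  proof (rule inj_onI)
    fix x y assume "x \<in> cubeI I" "y \<in> cubeI I" "x(a:=t) = y(a:=t)"
    then show "x = y" using cubeI_a0[OF assms(2)] by (metis fun_upd_idem fun_upd_upd)
  qed
  have disj: "(\<lambda>x. x(a:=1)) ` cubeI I \<inter> (\<lambda>x. x(a:=-1)) ` cubeI I = {}"
  proof -
    { fix x y :: "nat \<Rightarrow> real" have "x(a:=1) \<noteq> y(a:=-1)" by (metis fun_upd_same one_neq_neg_one) }
    then show ?thesis by blast
  qed
  have "(\<Sum>x\<in>cubeI (insert a I). F x) = (\<Sum>x\<in>(\<lambda>x. x(a:=1)) ` cubeI I. F x) + (\<Sum>x\<in>(\<lambda>x. x(a:=-1)) ` cubeI I. F x)"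
    unfolding cubeI_insert[OF assms(2)]
    by (rule sum.union_disjoint) (use finite_cubeI[OF assms(1)] disj in auto)
  also have "\<dots> = (\<Sum>x\<in>cubeI I. F (x(a:=1))) + (\<Sum>x\<in>cubeI I. F (x(a:=-1)))"
    by (simp add: sum.reindex[OF inj1])
  finally show ?thesis by (simp add: sum.distrib)
qed

lemma chi_upd_notin: "a \<notin> S \<Longrightarrow> chi S (y(a:=t)) = chi S y"
  unfolding chi_def by (rule prod.cong) auto

lemma chi_upd_in: "finite S \<Longrightarrow> a \<in> S \<Longrightarrow> chi S (y(a:=t)) = t * chi (S - {a}) y"
  unfolding chi_def
  by (subst prod.remove[of S a]) (auto intro!: prod.cong)

lemma orth:
  assumes "finite I"
  shows "S \<subseteq> I \<Longrightarrow> T \<subseteq> I \<Longrightarrow> (\<Sum>x\<in>cubeI I. chi S x * chi T x) = (if S = T then 2 ^ card I else 0)"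
  using assms
proof (induction I arbitrary: S T rule: finite_induct)
  case empty
  then show ?case by (simp add: cubeI_empty chi_def)
next
  case (insert a I)
  have fS: "finite S" "finite T" using insert.prems insert.hyps(1) by (simp_all add: finite_subset)
  have sum_eq: "(\<Sum>x\<in>cubeI (insert a I). chi S x * chi T x) =
     (\<Sum>x\<in>cubeI I. chi S (x(a:=1)) * chi T (x(a:=1)) + chi S (x(a:=-1)) * chi T (x(a:=-1)))"
    by (rule sum_cubeI_insert[OF insert(1,2)])
  show ?case
  proof (cases "a \<in> S")
    case aS: True
    show ?thesis
    proof (cases "a \<in> T")
      case aT: True
      have s1: "S - {a} \<subseteq> I" "T - {a} \<subseteq> I" using insert by auto
      have eqv: "(S - {a} = T - {a}) = (S = T)" using aS aT by blast
      have "(\<Sum>x\<in>cubeI I. chi S (x(a:=1)) * chi T (x(a:=1)) + chi S (x(a:=-1)) * chi T (x(a:=-1)))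
          = 2 * (\<Sum>x\<in>cubeI I. chi (S - {a}) x * chi (T - {a}) x)"
        by (simp add: chi_upd_in[OF fS(1) aS] chi_upd_in[OF fS(2) aT] sum_distrib_left)
      then show ?thesis unfolding sum_eq
        by (simp add: insert.IH[OF s1] eqv insert(1,2))
    next
      case aT: False
      have s1: "S - {a} \<subseteq> I" "T \<subseteq> I" using insert aT by auto
      have "S \<noteq> T" using aS aT by blast
      then show ?thesis unfolding sum_eq
        by (simp add: chi_upd_in[OF fS(1) aS] chi_upd_notin[OF aT])
    qed
  next
    case aS: False
    show ?thesis
    proof (cases "a \<in> T")
      case aT: True
      have "S \<noteq> T" using aS aT by blast
      then show ?thesis unfolding sum_eq
        by (simp add: chi_upd_in[OF fS(2) aT] chi_upd_notin[OF aS])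
    next
      case aT: False
      have s1: "S \<subseteq> I" "T \<subseteq> I" using insert aT aS by auto
      show ?thesis unfolding sum_eq
        by (simp add: chi_upd_notin[OF aS] chi_upd_notin[OF aT] insert.IH[OF s1] 
            sum.distrib[symmetric] insert(1,2) mult_2[symmetric] sum_distrib_left[symmetric])
    qed
  qed
qed

lemma dual:
  assumes "finite I" "x \<in> cubeI I" "y \<in> cubeI I"
  shows "(\<Sum>T\<in>Pow I. chi T x * chi T y) = (if x = y then 2 ^ card I else 0)"
proof -
  have "(\<Sum>T\<in>Pow I. chi T x * chi T y) = (\<Sum>T\<in>Pow I. (\<Prod>i\<in>T. x i * y i) * (\<Prod>i\<in>I - T. 1))"
    unfolding chi_def by (simp add: prod.distrib)
  also have "\<dots> = (\<Prod>i\<in>I. x i * y i + 1)"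
    by (rule prod_add[symmetric]) fact
  also have "\<dots> = (if x = y then 2 ^ card I else 0)"
  proof (cases "x = y")
    case True
    have "\<forall>i\<in>I. x i * y i + 1 = 2" using assms(2) True unfolding cubeI_def by auto
    then show ?thesis using True by simp
  next
    case False
    then obtain i where i: "x i \<noteq> y i" by auto
    have iI: "i \<in> I"
    proof (rule ccontr)
      assume "i \<notin> I"
      then have "x i = 0" "y i = 0" using cubeI_a0 assms(2,3) by auto
      then show False using i by simp
    qed
    have "x i = -1 \<or> x i = 1" "y i = -1 \<or> y i = 1" using assms iI unfolding cubeI_def by auto
    then have "x i * y i + 1 = 0" using i by auto
    then show ?thesis using False iI assms(1) by (auto intro: prod_zero)
  qed
  finally show ?thesis .
qed

lemma fourier_coeff_eq:
  assumes "S \<subseteq> {1..d}"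
  shows "fourier_coeff d g S = (\<Sum>x\<in>cube d. g x * chi S x) / 2^d"
proof -
  define I where "I = {1..d}"
  have fI: "finite I" and cI: "card I = d" unfolding I_def by auto
  have fC: "finite (cubeI I)" using finite_cubeI[OF fI] .
  define c where "c T = (if T \<in> Pow I then (\<Sum>x\<in>cubeI I. g x * chi T x) / 2^d else 0)" for T
  have P1: "(\<forall>T. T \<notin> Pow I \<longrightarrow> c T = 0)" unfolding c_def by auto
  have P2: "\<forall>x\<in>cubeI I. g x = (\<Sum>T\<in>Pow I. c T * (\<Prod>i\<in>T. x i))"
  proof
    fix x assume x: "x \<in> cubeI I"
    have "(\<Sum>T\<in>Pow I. c T * (\<Prod>i\<in>T. x i)) = (\<Sum>T\<in>Pow I. (\<Sum>y\<in>cubeI I. g y * (chi T y * chi T x)) / 2^d)"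
    proof (rule sum.cong[OF refl])
      fix T assume T: "T \<in> Pow I"
      have "c T * (\<Prod>i\<in>T. x i) = (\<Sum>y\<in>cubeI I. g y * chi T y) * chi T x / 2^d"
        using T unfolding c_def chi_def by simp
      also have "\<dots> = (\<Sum>y\<in>cubeI I. g y * (chi T y * chi T x)) / 2^d"
        by (simp only: sum_distrib_right mult.assoc)
      finally show "c T * (\<Prod>i\<in>T. x i) = (\<Sum>y\<in>cubeI I. g y * (chi T y * chi T x)) / 2^d" .
    qed
    also have "\<dots> = (\<Sum>y\<in>cubeI I. g y * (\<Sum>T\<in>Pow I. chi T y * chi T x)) / 2^d"
      unfolding sum_divide_distrib[symmetric] sum_distrib_left by (rule arg_cong[where f="\<lambda>t. t / 2^d"], rule sum.swap)
    also have "\<dots> = (\<Sum>y\<in>cubeI I. g y * (if y = x then 2 ^ d else 0)) / 2^d"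
      by (intro arg_cong[where f="\<lambda>t. t / 2^d"] sum.cong refl) (simp add: dual[OF fI _ x] cI)
    also have "\<dots> = g x"
      using x fC by (simp add: if_distrib sum.delta cong: if_cong)
    finally show "g x = (\<Sum>T\<in>Pow I. c T * (\<Prod>i\<in>T. x i))" by simp
  qed
  have uniq: "c' = c" if h1: "\<forall>T. T \<notin> Pow I \<longrightarrow> c' T = 0"
      and h2: "\<forall>x\<in>cubeI I. g x = (\<Sum>T\<in>Pow I. c' T * (\<Prod>i\<in>T. x i))" for c'
  proof
    fix T
    show "c' T = c T"
    proof (cases "T \<in> Pow I")
      case False then show ?thesis using h1 P1 by auto
    next
      case True
      have "(\<Sum>y\<in>cubeI I. g y * chi T y) = (\<Sum>y\<in>cubeI I. (\<Sum>T'\<in>Pow I. c' T' * (chi T' y * chi T y)))"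
        using h2 unfolding chi_def by (auto simp: sum_distrib_right mult.assoc intro!: sum.cong)
      also have "\<dots> = (\<Sum>T'\<in>Pow I. c' T' * (\<Sum>y\<in>cubeI I. chi T' y * chi T y))"
        unfolding sum_distrib_left mult.assoc by (rule sum.swap)
      also have "\<dots> = (\<Sum>T'\<in>Pow I. c' T' * (if T' = T then 2 ^ d else 0))"
        using True by (intro sum.cong refl) (simp add: orth[OF fI] cI)
      also have "\<dots> = c' T * 2 ^ d"
        using True fI by (simp add: if_distrib sum.delta cong: if_cong)
      finally show ?thesis using True unfolding c_def by simp
    qed
  qed
  have "fourier_coeff d g = c"
    unfolding fourier_coeff_def cube_eq I_def[symmetric]
    by (rule the_equality) (use P1 P2 in blast, use uniq in blast)
  then show ?thesis using assms unfolding c_def I_def cube_eq by auto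
qed

lemma sum_Pow_insert:
  assumes "finite J" "a \<notin> J"
  shows "(\<Sum>R\<in>Pow (insert a J). h R) = (\<Sum>R\<in>Pow J. h R) + (\<Sum>R\<in>Pow J. h (insert a R))"
proof -
  have inj: "inj_on (insert a) (Pow J)"
    using assms(2) by (intro inj_onI) (metis Pow_iff insert_absorb insert_ident subsetD)
  have "(\<Sum>R\<in>Pow (insert a J). h R) = (\<Sum>R\<in>Pow J. h R) + (\<Sum>R\<in>insert a ` Pow J. h R)"
    unfolding Pow_insert by (rule sum.union_disjoint) (use assms in auto)
  also have "(\<Sum>R\<in>insert a ` Pow J. h R) = (\<Sum>R\<in>Pow J. h (insert a R))"
    by (simp add: sum.reindex[OF inj])
  finally show ?thesis .
qed

lemma sinL:
  assumes "finite J"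
  shows "(\<forall>j\<in>J. x j = 1 \<or> x j = -1) \<Longrightarrow>
    (\<Sum>R\<in>Pow J. sin (\<alpha> + pi * real (card R) / 2) * chi R x) = sqrt 2 ^ card J * sin (\<alpha> + pi * (\<Sum>j\<in>J. x j) / 4)"
  using assms
proof (induction J arbitrary: \<alpha> rule: finite_induct)
  case empty
  then show ?case by (simp add: chi_def)
next
  case (insert a J)
  define s where "s = (\<Sum>j\<in>J. x j)"
  define \<beta> where "\<beta> = \<alpha> + pi * s / 4"
  have xa: "x a = 1 \<or> x a = -1" using insert.prems by auto
  have hJ: "\<forall>j\<in>J. x j = 1 \<or> x j = -1" using insert.prems by auto
  have "(\<Sum>R\<in>Pow (insert a J). sin (\<alpha> + pi * real (card R) / 2) * chi R x)
     = (\<Sum>R\<in>Pow J. sin (\<alpha> + pi * real (card R) / 2) * chi R x)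
     + (\<Sum>R\<in>Pow J. sin (\<alpha> + pi * real (card (insert a R)) / 2) * chi (insert a R) x)"
    by (rule sum_Pow_insert[OF insert(1,2)])
  also have "(\<Sum>R\<in>Pow J. sin (\<alpha> + pi * real (card (insert a R)) / 2) * chi (insert a R) x)
     = x a * (\<Sum>R\<in>Pow J. sin ((\<alpha> + pi / 2) + pi * real (card R) / 2) * chi R x)"
    unfolding sum_distrib_left
  proof (rule sum.cong[OF refl])
    fix R assume R: "R \<in> Pow J"
    then have fR: "finite R" and aR: "a \<notin> R" using insert(1,2) finite_subset by auto
    have c: "card (insert a R) = Suc (card R)" using fR aR by simp
    have ch: "chi (insert a R) x = x a * chi R x" unfolding chi_def using fR aR by simp
    have e: "\<alpha> + pi * real (Suc (card R)) / 2 = (\<alpha> + pi / 2) + pi * real (card R) / 2"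
      by (simp add: field_simps)
    show "sin (\<alpha> + pi * real (card (insert a R)) / 2) * chi (insert a R) x =
        x a * (sin ((\<alpha> + pi / 2) + pi * real (card R) / 2) * chi R x)"
      unfolding c ch e by simp
  qed
  also have "(\<Sum>R\<in>Pow J. sin ((\<alpha> + pi / 2) + pi * real (card R) / 2) * chi R x)
     = sqrt 2 ^ card J * sin (\<beta> + pi / 2)"
    unfolding insert.IH[OF hJ] \<beta>_def s_def by (simp add: algebra_simps)
  also have "(\<Sum>R\<in>Pow J. sin (\<alpha> + pi * real (card R) / 2) * chi R x) = sqrt 2 ^ card J * sin \<beta>"
    unfolding insert.IH[OF hJ] \<beta>_def s_def by simp
  finally have L0: "(\<Sum>R\<in>Pow (insert a J). sin (\<alpha> + pi * real (card R) / 2) * chi R x)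
     = sqrt 2 ^ card J * sin \<beta> + x a * (sqrt 2 ^ card J * sin (\<beta> + pi / 2))" .
  then have L: "(\<Sum>R\<in>Pow (insert a J). sin (\<alpha> + pi * real (card R) / 2) * chi R x)
     = sqrt 2 ^ card J * (sin \<beta> + x a * cos \<beta>)"
    by (simp add: sin_add algebra_simps)
  have sx: "(\<Sum>j\<in>insert a J. x j) = x a + s" unfolding s_def using insert(1,2) by simp
  have cs: "card (insert a J) = Suc (card J)" using insert(1,2) by simp
  have sq: "sqrt 2 * (sqrt 2 * z) = 2 * (z::real)" for z by (simp add: mult.assoc[symmetric])
  from xa show ?case
  proof
    assume x1: "x a = 1"
    have "\<alpha> + pi * (\<Sum>j\<in>insert a J. x j) / 4 = \<beta> + pi / 4"
      unfolding \<beta>_def sx using x1 by (simp add: field_simps)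
    then show ?thesis unfolding L cs using x1
      by (simp add: sin_add sin_45 cos_45 algebra_simps sq)
  next
    assume x1: "x a = -1"
    have "\<alpha> + pi * (\<Sum>j\<in>insert a J. x j) / 4 = \<beta> - pi / 4"
      unfolding \<beta>_def sx using x1 by (simp add: field_simps)
    then have E: "sin (\<alpha> + pi * (\<Sum>j\<in>insert a J. x j) / 4) = sin \<beta> * (sqrt 2 / 2) - cos \<beta> * (sqrt 2 / 2)"
      by (simp add: sin_diff sin_45 cos_45)
    show ?thesis unfolding L cs E using x1 by (simp add: algebra_simps sq)
  qed
qed

fun B :: "nat \<Rightarrow> (real \<Rightarrow> real) \<Rightarrow> real" where
  "B 0 F = F 0"
| "B (Suc n) F = B n (\<lambda>s. F (s + 1) + F (s - 1))"

lemma cube_B: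
  assumes "finite J"
  shows "(\<Sum>y\<in>cubeI J. F (\<Sum>j\<in>J. y j)) = B (card J) F"
  using assms
proof (induction J arbitrary: F rule: finite_induct)
  case empty
  then show ?case by (simp add: cubeI_empty)
next
  case (insert a J)
  have e: "(\<Sum>j\<in>insert a J. (y(a:=t)) j) = t + (\<Sum>j\<in>J. y j)" for y and t :: real
  proof -
    have "(\<Sum>j\<in>J. (y(a:=t)) j) = (\<Sum>j\<in>J. y j)" using insert(2) by (intro sum.cong) auto
    then show ?thesis using insert(1,2) by simp
  qed
  have "(\<Sum>y\<in>cubeI (insert a J). F (\<Sum>j\<in>insert a J. y j))
      = (\<Sum>y\<in>cubeI J. (\<lambda>s. F (s + 1) + F (s - 1)) (\<Sum>j\<in>J. y j))"
    unfolding sum_cubeI_insert[OF insert(1,2)] e by (simp add: add.commute)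
  also have "\<dots> = B (card J) (\<lambda>s. F (s + 1) + F (s - 1))" by (rule insert.IH)
  finally show ?case using insert(1,2) by simp
qed

lemma B_cong: "(\<And>s. s \<in> \<int> \<Longrightarrow> F s = G s) \<Longrightarrow> B n F = B n G"
proof (induction n arbitrary: F G)
  case 0 then show ?case by simp
next
  case (Suc n)
  show ?case unfolding B.simps
    by (rule Suc.IH) (simp add: Suc.prems)
qed

lemma B_lin: "B n (\<lambda>s. a * F s + b * G s) = a * B n F + b * B n G"
proof (induction n arbitrary: F G)
  case 0 then show ?case by simp
next
  case (Suc n)
  have "B (Suc n) (\<lambda>s. a * F s + b * G s) =
     B n (\<lambda>s. a * (F (s + 1) + F (s - 1)) + b * (G (s + 1) + G (s - 1)))"
    by (simp add: algebra_simps)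
  then show ?case using Suc.IH by simp
qed

lemma B_nonneg: "(\<And>s. F s \<ge> 0) \<Longrightarrow> B n F \<ge> 0"
proof (induction n arbitrary: F)
  case 0 then show ?case by simp
next
  case (Suc n) then show ?case by (simp add: add_nonneg_nonneg)
qed

lemma binom_shift:
  fixes G :: "nat \<Rightarrow> real"
  shows "(\<Sum>p\<le>Suc n. real (Suc n choose p) * G p) =
     (\<Sum>p\<le>n. real (n choose p) * G p) + (\<Sum>p\<le>n. real (n choose p) * G (Suc p))"
proof -
  have "(\<Sum>p\<le>Suc n. real (Suc n choose p) * G p) = G 0 + (\<Sum>p\<le>n. real (Suc n choose Suc p) * G (Suc p))"
    by (subst sum.atMost_Suc_shift) simp
  also have "\<dots> = G 0 + (\<Sum>p\<le>n. real (n choose Suc p) * G (Suc p)) + (\<Sum>p\<le>n. real (n choose p) * G (Suc p))"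
    by (simp add: sum.distrib algebra_simps)
  also have "G 0 + (\<Sum>p\<le>n. real (n choose Suc p) * G (Suc p)) = (\<Sum>p\<le>Suc n. real (n choose p) * G p)"
    by (rule sym, subst sum.atMost_Suc_shift, simp)
  also have "\<dots> = (\<Sum>p\<le>n. real (n choose p) * G p)"
    by simp
  finally show ?thesis .
qed

lemma B_binom: "B n F = (\<Sum>p\<le>n. real (n choose p) * F (2 * real p - real n))"
proof (induction n arbitrary: F)
  case 0 then show ?case by simp
next
  case (Suc n)
  have "B (Suc n) F = (\<Sum>p\<le>n. real (n choose p) * (F (2 * real p - real n + 1) + F (2 * real p - real n - 1)))"
    using Suc.IH by simp
  also have "\<dots> = (\<Sum>p\<le>n. real (n choose p) * F (2 * real p - real (Suc n))) +
      (\<Sum>p\<le>n. real (n choose p) * F (2 * real (Suc p) - real (Suc n)))"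
    by (simp add: sum.distrib algebra_simps)
  also have "\<dots> = (\<Sum>p\<le>Suc n. real (Suc n choose p) * F (2 * real p - real (Suc n)))"
    by (rule binom_shift[symmetric])
  finally show ?case .
qed

definition F1 :: "real \<Rightarrow> real" where
  "F1 s = (\<bar>1 + s\<bar> - \<bar>s - 1\<bar>) * sin (pi * s / 4)"

definition dl :: "real \<Rightarrow> real" where
  "dl s = (if s = 0 then 1 else 0)"

lemma sin_pm: "sin (a + pi / 4) + sin (a - pi / 4) = sqrt 2 * sin a"
  by (simp add: sin_add sin_diff sin_45 cos_45)

lemma F1_rec:
  assumes "s \<in> \<int>"
  shows "F1 (s + 1) + F1 (s - 1) = sqrt 2 * F1 s + 2 * sqrt 2 * dl s"
proof -
  obtain k where k: "s = of_int k" using assms Ints_cases by blast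
  have e1: "pi * (s + 1) / 4 = pi * s / 4 + pi / 4" by (simp add: field_simps)
  have e2: "pi * (s - 1) / 4 = pi * s / 4 - pi / 4" by (simp add: field_simps)
  consider "k = 0" | "k = 1" | "k \<ge> 2" | "k = -1" | "k \<le> -2" by linarith
  then show ?thesis
  proof cases
    case 1
    then show ?thesis using k by (simp add: F1_def dl_def sin_45)
  next
    case 2
    then have s: "s = 1" using k by simp
    show ?thesis unfolding s F1_def dl_def by (simp add: sin_45)
  next
    case 3
    then have s: "s \<ge> 2" using k by simp
    have "F1 (s + 1) + F1 (s - 1) = 2 * (sin (pi * s / 4 + pi / 4) + sin (pi * s / 4 - pi / 4))"
      unfolding F1_def e1 e2 using s by simp
    then show ?thesis unfolding sin_pm F1_def dl_def using s by simp
  next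
    case 4
    then have s: "s = -1" using k by simp
    show ?thesis unfolding s F1_def dl_def by (simp add: sin_45)
  next
    case 5
    then have s: "s \<le> -2" using k by simp
    have "F1 (s + 1) + F1 (s - 1) = -2 * (sin (pi * s / 4 + pi / 4) + sin (pi * s / 4 - pi / 4))"
      unfolding F1_def e1 e2 using s by simp
    then show ?thesis unfolding sin_pm F1_def dl_def using s by simp
  qed
qed

definition Fn :: "nat \<Rightarrow> real" where "Fn N = B N F1"
definition Dn :: "nat \<Rightarrow> real" where "Dn N = B N dl"

lemma Fn_rec: "Fn (Suc N) = sqrt 2 * Fn N + 2 * sqrt 2 * Dn N"
proof -
  have "Fn (Suc N) = B N (\<lambda>s. sqrt 2 * F1 s + (2 * sqrt 2) * dl s)"
    unfolding Fn_def B.simps by (rule B_cong) (simp add: F1_rec)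
  then show ?thesis unfolding Fn_def Dn_def B_lin by simp
qed

lemma Dn_nonneg: "Dn N \<ge> 0"
  unfolding Dn_def by (rule B_nonneg) (simp add: dl_def)

lemma Fn_nonneg: "Fn N \<ge> 0"
proof (induction N)
  case 0 then show ?case by (simp add: Fn_def F1_def)
next
  case (Suc N) then show ?case using Dn_nonneg by (simp add: Fn_rec)
qed

lemma Dn_central: "Dn (2 * j) \<ge> real ((2 * j) choose j)"
proof -
  have "real ((2 * j) choose j) = real ((2 * j) choose j) * dl (2 * real j - real (2 * j))"
    by (simp add: dl_def)
  also have "\<dots> \<le> (\<Sum>p\<le>2 * j. real ((2 * j) choose p) * dl (2 * real p - real (2 * j)))"
    by (rule member_le_sum[where f = "\<lambda>p. real ((2 * j) choose p) * dl (2 * real p - real (2 * j))"])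
       (auto simp: dl_def)
  finally show ?thesis unfolding Dn_def B_binom .
qed

lemma Fn_4: "Fn (k + 4) \<ge> 8 * Dn k + 4 * Dn (k + 2)"
proof -
  have s2: "sqrt 2 * sqrt 2 = (2::real)" by simp
  have s3: "sqrt 2 * (sqrt 2 * z) = 2 * (z::real)" for z by (simp add: mult.assoc[symmetric])
  have r1: "Fn (k + 4) \<ge> sqrt 2 * Fn (k + 3)"
    using Fn_rec[of "k + 3"] Dn_nonneg[of "k+3"] by (simp add: numeral_eq_Suc)
  have r2: "Fn (k + 3) = sqrt 2 * Fn (k + 2) + 2 * sqrt 2 * Dn (k + 2)"
    using Fn_rec[of "k + 2"] by (simp add: numeral_eq_Suc)
  have r3: "Fn (k + 2) \<ge> sqrt 2 * Fn (k + 1)"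
    using Fn_rec[of "k + 1"] Dn_nonneg[of "k+1"] by (simp add: numeral_eq_Suc)
  have r4: "Fn (k + 1) \<ge> 2 * sqrt 2 * Dn k"
    using Fn_rec[of k] Fn_nonneg[of k] by simp
  have a: "Fn (k + 2) \<ge> 4 * Dn k"
  proof -
    have "sqrt 2 * Fn (k + 1) \<ge> sqrt 2 * (2 * sqrt 2 * Dn k)"
      using r4 by (intro mult_left_mono) auto
    then show ?thesis using r3 s2 by (simp add: algebra_simps)
  qed
  have b: "Fn (k + 3) \<ge> sqrt 2 * (4 * Dn k) + 2 * sqrt 2 * Dn (k + 2)"
    using r2 a by (simp add: mult_left_mono)
  have "sqrt 2 * Fn (k + 3) \<ge> sqrt 2 * (sqrt 2 * (4 * Dn k) + 2 * sqrt 2 * Dn (k + 2))"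
    using b by (intro mult_left_mono) auto
  then show ?thesis using r1 by (simp add: algebra_simps s3)
qed

lemma cb_rec: "real (Suc j) * real ((2 * Suc j) choose Suc j) = 2 * (2 * real j + 1) * real ((2 * j) choose j)"
proof -
  define A where "A = real ((2 * Suc j) choose Suc j)"
  define Bc where "Bc = real (Suc (2*j) choose j)"
  define C where "C = real ((2*j) choose j)"
  have h1: "Suc (Suc (2*j)) * (Suc (2*j) choose j) = (Suc (Suc (2*j)) choose Suc j) * Suc j"
    by (rule Suc_times_binomial_eq)
  have h2: "Suc (2*j) * ((2*j) choose j) = (Suc (2*j) choose Suc j) * Suc j"
    by (rule Suc_times_binomial_eq)
  have h3: "(Suc (2*j) choose Suc j) = (Suc (2*j) choose j)"
    using binomial_symmetric[of j "Suc (2*j)"] by simp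
  have e: "2 * Suc j = Suc (Suc (2*j))" by simp
  have r1: "(2 * real j + 2) * Bc = A * (real j + 1)"
    unfolding A_def Bc_def e using arg_cong[OF h1, of real] by (simp del: binomial_Suc_Suc add: algebra_simps)
  have r2: "(2 * real j + 1) * C = Bc * (real j + 1)"
    unfolding C_def Bc_def using arg_cong[OF h2, of real] h3 by (simp del: binomial_Suc_Suc add: algebra_simps)
  have "(real j + 1) * ((real j + 1) * A) = (real j + 1) * (2 * (2 * real j + 1) * C)"
  proof -
    have "(real j + 1) * ((real j + 1) * A) = (real j + 1) * ((2 * real j + 2) * Bc)" using r1 by (simp add: algebra_simps)
    also have "\<dots> = (real j + 1) * (2 * (Bc * (real j + 1)))" by (simp add: algebra_simps)
    also have "\<dots> = (real j + 1) * (2 * ((2 * real j + 1) * C))" using r2 by simp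
    finally show ?thesis by (simp add: algebra_simps)
  qed
  then have "(real j + 1) * A = 2 * (2 * real j + 1) * C" by simp
  then show ?thesis unfolding A_def C_def by (simp del: binomial_Suc_Suc add: algebra_simps)
qed

lemma cb_low: "j \<ge> 1 \<Longrightarrow> (16::real) ^ j \<le> 4 * real j * (real ((2 * j) choose j))^2"
proof (induction j)
  case 0 then show ?case by simp
next
  case (Suc j)
  show ?case
  proof (cases "j = 0")
    case True then show ?thesis by simp
  next
    case False
    define c where "c = real ((2 * j) choose j)"
    define c' where "c' = real ((2 * Suc j) choose Suc j)"
    have IH: "16 ^ j \<le> 4 * real j * c^2" using Suc False unfolding c_def by simp
    have rec: "(real j + 1) * c' = 2 * (2 * real j + 1) * c" using cb_rec[of j] unfolding c_def c'_def by (simp del: binomial_Suc_Suc add: algebra_simps)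
    have jp: "real j > 0" using False by simp
    have "4 * real j * ((real j + 1) * 16 ^ Suc j) \<le> 16 * (2 * real j + 1)^2 * 16 ^ j"
    proof -
      have "4 * real j * (real j + 1) \<le> (2 * real j + 1)^2" by (simp add: power2_eq_square algebra_simps)
      then have "4 * real j * (real j + 1) * 16 ^ Suc j \<le> (2 * real j + 1)^2 * 16 ^ Suc j"
        by (intro mult_right_mono) auto
      then show ?thesis by (simp add: algebra_simps)
    qed
    also have "\<dots> \<le> 16 * (2 * real j + 1)^2 * (4 * real j * c^2)"
      using IH by (intro mult_left_mono) auto
    finally have "4 * real j * ((real j + 1) * 16 ^ Suc j) \<le> 4 * real j * (16 * (2 * real j + 1)^2 * c^2)"
      by (simp add: algebra_simps)
    then have "(real j + 1) * 16 ^ Suc j \<le> 16 * (2 * real j + 1)^2 * c^2"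
      using jp by simp
    also have "\<dots> = 4 * ((real j + 1) * c')^2" unfolding rec by (simp add: power2_eq_square algebra_simps)
    also have "\<dots> = (real j + 1) * (4 * (real j + 1) * c'^2)" by (simp add: power2_eq_square algebra_simps)
    finally have "(real j + 1) * 16 ^ Suc j \<le> (real j + 1) * (4 * (real j + 1) * c'^2)" .
    then have "16 ^ Suc j \<le> 4 * (real j + 1) * c'^2"
      by (rule mult_left_le_imp_le) simp
    then show ?thesis unfolding c'_def by (simp add: algebra_simps)
  qed
qed

lemma final_num:
  assumes "m \<ge> 2"
  shows "(2::real) ^ (2 * m) \<le> Fn (2 * m) * sqrt (real (2 * m))"
proof -
  define j where "j = m - 2"
  have m: "m = j + 2" using assms unfolding j_def by simp
  define a where "a = real ((2 * j) choose j)"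
  define b where "b = real ((2 * Suc j) choose Suc j)"
  have Da: "Dn (2 * j) \<ge> a" unfolding a_def by (rule Dn_central)
  have Db: "Dn (2 * j + 2) \<ge> b" unfolding b_def using Dn_central[of "Suc j"] by simp
  have b0: "b \<ge> 0" unfolding b_def by simp
  have ba: "b \<le> 4 * a"
  proof -
    have "(real j + 1) * b = 2 * (2 * real j + 1) * a" using cb_rec[of j] unfolding a_def b_def by (simp del: binomial_Suc_Suc add: algebra_simps)
    also have "\<dots> \<le> (real j + 1) * (4 * a)" unfolding a_def by (simp add: algebra_simps)
    finally show ?thesis by (rule mult_left_le_imp_le) simp
  qed
  have F: "Fn (2 * m) \<ge> 6 * b"
  proof -
    have "Fn (2 * j + 4) \<ge> 8 * Dn (2 * j) + 4 * Dn (2 * j + 2)" by (rule Fn_4)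
    moreover have "2 * j + 4 = 2 * m" using m by simp
    ultimately have "Fn (2 * m) \<ge> 8 * Dn (2 * j) + 4 * Dn (2 * j + 2)" by simp
    then show ?thesis using Da Db ba by linarith
  qed
  have bl: "(16::real) ^ (Suc j) \<le> 4 * real (Suc j) * b^2" unfolding b_def by (rule cb_low) simp
  have sq: "((2::real) ^ (2 * m))^2 \<le> (6 * b * sqrt (real (2 * m)))^2"
  proof -
    have "((2::real) ^ (2 * m))^2 = 16 * 16 ^ Suc j"
    proof -
      have "(2::real) ^ (4 * j) = 16 ^ j" by (simp add: power_mult)
      then show ?thesis unfolding m by (simp add: power_mult[symmetric] power_add)
    qed
    also have "\<dots> \<le> 16 * (4 * real (Suc j) * b^2)" using bl by (intro mult_left_mono) auto
    also have "\<dots> \<le> 36 * b^2 * real (2 * m)" unfolding m using b0 by (simp add: algebra_simps)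
    also have "\<dots> = (6 * b * sqrt (real (2 * m)))^2" by (simp add: power_mult_distrib)
    finally show ?thesis .
  qed
  have "(2::real) ^ (2 * m) \<le> 6 * b * sqrt (real (2 * m))"
    by (rule power2_le_imp_le[OF sq]) (use b0 in simp)
  also have "\<dots> \<le> Fn (2 * m) * sqrt (real (2 * m))"
    using F by (intro mult_right_mono) auto
  finally show ?thesis .
qed

theorem lemma25:
  fixes d u :: nat
  assumes "d \<ge> 5" and "d mod 4 = 1" and "u \<in> {1..d}"
  shows "(\<Sum>S\<in>{S\<in>Pow {1..d}. u \<in> S}.
            \<bar>fourier_coeff d (\<lambda>x. \<bar>\<Sum>i=1..d. x i\<bar>) S\<bar>)
         \<ge> 2 powr ((real d - 1) / 2) / (2 * sqrt (real d - 1))"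
proof -
  define I where "I = {1..d}"
  define J where "J = I - {u}"
  define g where "g = (\<lambda>x::nat\<Rightarrow>real. \<bar>\<Sum>i=1..d. x i\<bar>)"
  define n where "n = d - 1"
  define fc where "fc = fourier_coeff d g"
  define sJ where "sJ = (\<lambda>x::nat\<Rightarrow>real. \<Sum>j\<in>J. x j)"
  define \<epsilon> where "\<epsilon> S = sin (pi * real (card S - 1) / 2)" for S :: "nat set"
  have fI: "finite I" and fJ: "finite J" unfolding I_def J_def by auto
  have uJ: "u \<notin> J" unfolding J_def by auto
  have IJ: "I = insert u J" using assms(3) unfolding I_def J_def by auto
  have cJ: "card J = n" using assms(3) unfolding J_def I_def n_def by simp
  obtain m where nm: "n = 2 * m" and m2: "m \<ge> 2"
  proof -
    have "n mod 4 = 0" using assms(1,2) unfolding n_def by presburger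
    then have "n = 2 * (n div 2)" "n div 2 \<ge> 2" using assms(1) unfolding n_def by presburger+
    then show ?thesis using that by blast
  qed
  have step1: "(\<Sum>S\<in>{S\<in>Pow I. u\<in>S}. \<epsilon> S * fc S) \<le> (\<Sum>S\<in>{S\<in>Pow I. u\<in>S}. \<bar>fc S\<bar>)"
  proof (rule sum_mono)
    fix S
    have "\<epsilon> S * fc S \<le> \<bar>\<epsilon> S\<bar> * \<bar>fc S\<bar>" by (metis abs_ge_self abs_mult)
    also have "\<dots> \<le> 1 * \<bar>fc S\<bar>" unfolding \<epsilon>_def by (intro mult_right_mono) auto
    finally show "\<epsilon> S * fc S \<le> \<bar>fc S\<bar>" by simp
  qed
  have set_eq: "{S\<in>Pow I. u\<in>S} = insert u ` Pow J"
  proof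
    show "{S\<in>Pow I. u\<in>S} \<subseteq> insert u ` Pow J"
    proof
      fix S assume S: "S \<in> {S\<in>Pow I. u\<in>S}"
      then have "S = insert u (S - {u})" "S - {u} \<in> Pow J" unfolding J_def by auto
      then show "S \<in> insert u ` Pow J" by blast
    qed
    show "insert u ` Pow J \<subseteq> {S\<in>Pow I. u\<in>S}" using IJ by auto
  qed
  have inj: "inj_on (insert u) (Pow J)"
    using uJ by (intro inj_onI) (metis Pow_iff insert_absorb insert_ident subsetD)
  define s where "s R = sin (pi * real (card R) / 2)" for R :: "nat set"
  define h where "h R x = g x * (x u * chi R x)" for R :: "nat set" and x :: "nat \<Rightarrow> real"
  have step2: "(\<Sum>S\<in>{S\<in>Pow I. u\<in>S}. \<epsilon> S * fc S) = (\<Sum>R\<in>Pow J. s R * ((\<Sum>x\<in>cube d. h R x) / 2^d))"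
    unfolding set_eq sum.reindex[OF inj] comp_def
  proof (rule sum.cong[OF refl])
    fix R assume R: "R \<in> Pow J"
    then have fR: "finite R" and uR: "u \<notin> R" using fJ uJ finite_subset by auto
    have sub: "insert u R \<subseteq> {1..d}" using R IJ unfolding I_def by auto
    have c: "card (insert u R) - 1 = card R" using fR uR by simp
    have ch: "chi (insert u R) x = x u * chi R x" for x unfolding chi_def using fR uR by simp
    show "\<epsilon> (insert u R) * fc (insert u R) = s R * ((\<Sum>x\<in>cube d. h R x) / 2^d)"
      unfolding \<epsilon>_def c s_def fc_def fourier_coeff_eq[OF sub] h_def ch ..
  qed
  have step3: "(\<Sum>R\<in>Pow J. s R * ((\<Sum>x\<in>cube d. h R x) / 2^d))
      = (\<Sum>x\<in>cube d. g x * x u * (\<Sum>R\<in>Pow J. s R * chi R x)) / 2^d"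
  proof -
    have "(\<Sum>R\<in>Pow J. s R * ((\<Sum>x\<in>cube d. h R x) / 2^d)) = (\<Sum>R\<in>Pow J. \<Sum>x\<in>cube d. s R * h R x) / 2^d"
      by (simp add: sum_distrib_left sum_divide_distrib)
    also have "(\<Sum>R\<in>Pow J. \<Sum>x\<in>cube d. s R * h R x) = (\<Sum>x\<in>cube d. \<Sum>R\<in>Pow J. s R * h R x)"
      by (rule sum.swap)
    also have "\<dots> = (\<Sum>x\<in>cube d. g x * x u * (\<Sum>R\<in>Pow J. s R * chi R x))"
      unfolding h_def by (intro sum.cong refl) (simp add: sum_distrib_left mult_ac)
    finally show ?thesis .
  qed
  have step4: "(\<Sum>x\<in>cube d. g x * x u * (\<Sum>R\<in>Pow J. s R * chi R x))
      = (\<Sum>x\<in>cube d. g x * x u * (sqrt 2 ^ n * sin (pi * sJ x / 4)))"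
  proof (rule sum.cong[OF refl])
    fix x assume x: "x \<in> cube d"
    have hx: "\<forall>j\<in>J. x j = 1 \<or> x j = -1" using x unfolding cube_def J_def I_def by auto
    show "g x * x u * (\<Sum>R\<in>Pow J. s R * chi R x) = g x * x u * (sqrt 2 ^ n * sin (pi * sJ x / 4))"
      using sinL[OF fJ hx, of 0] unfolding s_def sJ_def cJ by simp
  qed
  have step5: "(\<Sum>x\<in>cube d. g x * x u * (sqrt 2 ^ n * sin (pi * sJ x / 4)))
      = sqrt 2 ^ n * (\<Sum>y\<in>cubeI J. F1 (sJ y))"
  proof -
    have "(\<Sum>x\<in>cube d. g x * x u * (sqrt 2 ^ n * sin (pi * sJ x / 4)))
       = (\<Sum>x\<in>cubeI (insert u J). g x * x u * (sqrt 2 ^ n * sin (pi * sJ x / 4)))"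
      unfolding cube_eq I_def[symmetric] IJ ..
    also have "\<dots> = (\<Sum>y\<in>cubeI J. sqrt 2 ^ n * F1 (sJ y))"
      unfolding sum_cubeI_insert[OF fJ uJ]
    proof (rule sum.cong[OF refl])
      fix y
      have e1: "sJ (y(u:=t)) = sJ y" for t unfolding sJ_def using uJ by (intro sum.cong) auto
      have e2: "g (y(u:=t)) = \<bar>t + sJ y\<bar>" for t
      proof -
        have "(\<Sum>i=1..d. (y(u:=t)) i) = (\<Sum>i\<in>insert u J. (y(u:=t)) i)" using IJ unfolding I_def by simp
        also have "\<dots> = t + sJ (y(u:=t))" unfolding sJ_def using fJ uJ by simp
        finally show ?thesis unfolding g_def e1 by simp
      qed
      show "g (y(u:=1)) * (y(u:=1)) u * (sqrt 2 ^ n * sin (pi * sJ (y(u:=1)) / 4)) +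
            g (y(u:=-1)) * (y(u:=-1)) u * (sqrt 2 ^ n * sin (pi * sJ (y(u:=-1)) / 4))
          = sqrt 2 ^ n * F1 (sJ y)"
        unfolding e1 e2 F1_def by (simp add: algebra_simps)
    qed
    also have "\<dots> = sqrt 2 ^ n * (\<Sum>y\<in>cubeI J. F1 (sJ y))" by (simp add: sum_distrib_left)
    finally show ?thesis .
  qed
  have step6: "(\<Sum>y\<in>cubeI J. F1 (sJ y)) = Fn n"
    unfolding sJ_def Fn_def cube_B[OF fJ] cJ ..
  have lower: "(\<Sum>S\<in>{S\<in>Pow I. u\<in>S}. \<bar>fc S\<bar>) \<ge> sqrt 2 ^ n * Fn n / 2^d"
    using step1 unfolding step2 step3 step4 step5 step6 by simp
  have rd: "real d - 1 = real n" unfolding n_def using assms(1) by simp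
  have pw: "2 powr (real n / 2) = sqrt 2 ^ n"
  proof -
    have "sqrt 2 ^ n = (2 powr (1/2)) ^ n" by (simp add: powr_half_sqrt)
    also have "\<dots> = (2 powr (1/2)) powr real n" by (simp add: powr_realpow)
    also have "\<dots> = 2 powr (real n / 2)" by (simp add: powr_powr)
    finally show ?thesis by simp
  qed
  have dS: "d = Suc n" unfolding n_def using assms(1) by simp
  have dn: "(2::real) ^ d = 2 * 2 ^ n" unfolding dS by simp
  have key: "(2::real) ^ n \<le> Fn n * sqrt (real n)" unfolding nm by (rule final_num[OF m2])
  have sqn: "sqrt (real n) > 0" using nm m2 by simp
  have "2 powr ((real d - 1) / 2) / (2 * sqrt (real d - 1)) = sqrt 2 ^ n * 2 ^ n / (2 * 2 ^ n * sqrt (real n))"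
    unfolding rd pw by simp
  also have "\<dots> \<le> sqrt 2 ^ n * (Fn n * sqrt (real n)) / (2 * 2 ^ n * sqrt (real n))"
    using key sqn by (intro divide_right_mono mult_left_mono) auto
  also have "\<dots> = sqrt 2 ^ n * Fn n / 2^d" unfolding dn using sqn by simp
  also have "\<dots> \<le> (\<Sum>S\<in>{S\<in>Pow I. u\<in>S}. \<bar>fc S\<bar>)" by (rule lower)
  finally show ?thesis unfolding fc_def g_def I_def .
qed

end
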